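(* Let $k,l\in\mathbb{N}$ and $\omega=e^{2\pi i/k}$. The space $$\mathrm{Hol}^{k,l}(\mathbb{C}^*,\mathbb{C})=\{f\in\mathrm{Hol}(\mathbb{C}^*,\mathbb{C}):\ f(\omega z)=\omega^l f(z)\ \text{for all } z\in\mathbb{C}^*\},$$ graded by $\|f\|_n=\sup_{z\in A_n}|f(z)|$ with $A_n=\{z:e^{-n}\le|z|\le e^n\}$, is a tame Fréchet space.
   Context: $\mathrm{Hol}(\mathbb{C}^*,\mathbb{C})$ is the space of holomorphic functions on $\mathbb{C}^*$. A graded Fréchet space has seminorms $\|\cdot\|_0\le\|\cdot\|_1\le\cdots$ defining its topology. For a Banach space $B$, $\Sigma(B)$ is the space of sequences $(f_k)_{k\ge0}$ in $B$ with $\sum_k e^{nk}\|f_k\|_B<\infty$ for all $n$, graded by these sums. A linear map between graded spaces is tame if $\|\varphi f\|_n\le C(n)\|f\|_{n+r}$ for some $r,b$, constants $C(n)$, all $n\ge b$. A tame Fréchet space is a graded Fréchet space $F$ admitting tame linear maps $\varphi:F\to\Sigma(B)$, $\psi:\Sigma(B)\to F$ with $\psi\circ\varphi=\mathrm{id}$ for some Banach space $B$. *)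

theory Defs
  imports "HOL-Analysis.Analysis" "HOL-Library.Function_Algebras"
begin

(* Pointwise real vector space structure on function spaces
   (plus/zero/minus come from HOL-Library.Function_Algebras). *)
instantiation "fun" :: (type, real_vector) real_vector
begin
definition scaleR_fun :: "real \<Rightarrow> ('a \<Rightarrow> 'b) \<Rightarrow> 'a \<Rightarrow> 'b"
  where "scaleR_fun a f = (\<lambda>x. a *\<^sub>R f x)"
instance
  by standard (simp_all add: scaleR_fun_def fun_eq_iff scaleR_add_right scaleR_add_left)
end

definition lin_subspace :: "'a::real_vector set \<Rightarrow> bool" where
  "lin_subspace F \<longleftrightarrow> 0 \<in> F \<and> (\<forall>x\<in>F. \<forall>y\<in>F. x + y \<in> F) \<and> (\<forall>a. \<forall>x\<in>F. a *\<^sub>R x \<in> F)"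

definition seminorm_on :: "'a::real_vector set \<Rightarrow> ('a \<Rightarrow> real) \<Rightarrow> bool" where
  "seminorm_on F p \<longleftrightarrow>
     (\<forall>x\<in>F. 0 \<le> p x) \<and> (\<forall>x\<in>F. \<forall>y\<in>F. p (x + y) \<le> p x + p y) \<and>
     (\<forall>a. \<forall>x\<in>F. p (a *\<^sub>R x) = \<bar>a\<bar> * p x)"

definition banach_on :: "'b::real_vector set \<Rightarrow> ('b \<Rightarrow> real) \<Rightarrow> bool" where
  "banach_on V N \<longleftrightarrow> lin_subspace V \<and> seminorm_on V N \<and>
     (\<forall>x\<in>V. N x = 0 \<longrightarrow> x = 0) \<and>
     (\<forall>X. (\<forall>m::nat. X m \<in> V) \<and> (\<forall>e>0. \<exists>M. \<forall>m\<ge>M. \<forall>n\<ge>M. N (X m - X n) < e)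
        \<longrightarrow> (\<exists>x\<in>V. \<forall>e>0. \<exists>M. \<forall>n\<ge>M. N (X n - x) < e))"

definition graded_frechet :: "'a::real_vector set \<Rightarrow> (nat \<Rightarrow> 'a \<Rightarrow> real) \<Rightarrow> bool" where
  "graded_frechet F nrm \<longleftrightarrow> lin_subspace F \<and> (\<forall>n. seminorm_on F (nrm n)) \<and>
     (\<forall>n. \<forall>f\<in>F. nrm n f \<le> nrm (Suc n) f) \<and>
     (\<forall>f\<in>F. (\<forall>n. nrm n f = 0) \<longrightarrow> f = 0) \<and>
     (\<forall>X. (\<forall>m::nat. X m \<in> F) \<and> (\<forall>n. \<forall>e>0. \<exists>M. \<forall>i\<ge>M. \<forall>j\<ge>M. nrm n (X i - X j) < e)
        \<longrightarrow> (\<exists>f\<in>F. \<forall>n. \<forall>e>0. \<exists>M. \<forall>i\<ge>M. nrm n (X i - f) < e))"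

definition tame_map :: "'a::real_vector set \<Rightarrow> (nat \<Rightarrow> 'a \<Rightarrow> real) \<Rightarrow>
    'c::real_vector set \<Rightarrow> (nat \<Rightarrow> 'c \<Rightarrow> real) \<Rightarrow> ('a \<Rightarrow> 'c) \<Rightarrow> bool" where
  "tame_map F nF G nG \<phi> \<longleftrightarrow> (\<forall>f\<in>F. \<phi> f \<in> G) \<and>
     (\<forall>f\<in>F. \<forall>g\<in>F. \<phi> (f + g) = \<phi> f + \<phi> g) \<and> (\<forall>a. \<forall>f\<in>F. \<phi> (a *\<^sub>R f) = a *\<^sub>R \<phi> f) \<and>
     (\<exists>r b::nat. \<exists>C::nat \<Rightarrow> real. \<forall>n\<ge>b. \<forall>f\<in>F. nG n (\<phi> f) \<le> C n * nF (n + r) f)"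

definition Sigma_space :: "'b::real_vector set \<Rightarrow> ('b \<Rightarrow> real) \<Rightarrow> (nat \<Rightarrow> 'b) set" where
  "Sigma_space V N = {s. (\<forall>k. s k \<in> V) \<and>
      (\<forall>n::nat. summable (\<lambda>k. exp (real n * real k) * N (s k)))}"

definition Sigma_norm :: "('b \<Rightarrow> real) \<Rightarrow> nat \<Rightarrow> (nat \<Rightarrow> 'b) \<Rightarrow> real" where
  "Sigma_norm N n s = (\<Sum>k. exp (real n * real k) * N (s k))"

(* Tame Frechet space.  The Banach space B is represented as a linear subspace V
   of the real vector space nat => real (of dimension continuum) with a complete norm N. *)
definition tame_frechet :: "'a::real_vector set \<Rightarrow> (nat \<Rightarrow> 'a \<Rightarrow> real) \<Rightarrow> bool" where
  "tame_frechet F nrm \<longleftrightarrow> graded_frechet F nrm \<and>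
     (\<exists>(V :: (nat \<Rightarrow> real) set) N \<phi> \<psi>. banach_on V N \<and>
        tame_map F nrm (Sigma_space V N) (Sigma_norm N) \<phi> \<and>
        tame_map (Sigma_space V N) (Sigma_norm N) F nrm \<psi> \<and>
        (\<forall>f\<in>F. \<psi> (\<phi> f) = f))"

(* Hol^{k,l}(C^*,C); functions are normalised by f 0 = 0 (the value at 0 is irrelevant) *)
definition Hol_kl :: "nat \<Rightarrow> nat \<Rightarrow> (complex \<Rightarrow> complex) set" where
  "Hol_kl k l = {f. f holomorphic_on (- {0}) \<and> f 0 = 0 \<and>
      (\<forall>z. z \<noteq> 0 \<longrightarrow> f (exp (2 * pi * \<i> / of_nat k) * z) = exp (2 * pi * \<i> / of_nat k) ^ l * f z)}"

definition annulus_A :: "nat \<Rightarrow> complex set" where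
  "annulus_A n = {z. exp (- real n) \<le> cmod z \<and> cmod z \<le> exp (real n)}"

definition hol_norm :: "nat \<Rightarrow> (complex \<Rightarrow> complex) \<Rightarrow> real" where
  "hol_norm n f = (SUP z\<in>annulus_A n. cmod (f z))"

end

theory Submission
  imports Defs "HOL-Complex_Analysis.Complex_Analysis"
begin

lemma ci_radius:
  assumes g: "g holomorphic_on -{0}" and r: "0 < r" and s: "0 < s"
  shows "contour_integral (circlepath 0 r) g = contour_integral (circlepath 0 s) g"
proof (rule Cauchy_theorem_homotopic_loops[OF _ _ g])
  show "homotopic_loops (-{0}) (circlepath 0 r) (circlepath 0 s)"
  proof (rule homotopic_loops_linear)
    fix t x assume "t \<in> {0..(1::real)}"
    show "closed_segment (circlepath 0 r t) (circlepath 0 s t) \<subseteq> -{0}"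
    proof
      fix y assume "y \<in> closed_segment (circlepath 0 r t) (circlepath 0 s t)"
      then obtain u where u: "0 \<le> u" "u \<le> 1" and y: "y = (1-u) *\<^sub>R circlepath 0 r t + u *\<^sub>R circlepath 0 s t"
        by (auto simp: closed_segment_def)
      define c where "c = (1 - u) * r + u * s"
      have "y = complex_of_real c * exp(2 * of_real pi * \<i> * of_real t)"
        by (simp add: y c_def circlepath scaleR_conv_of_real algebra_simps)
      moreover have "c > 0" unfolding c_def
        using u r s by (smt (verit) mult_nonneg_nonneg mult_pos_pos)
      ultimately show "y \<in> -{0}" by auto
    qed
  qed auto
qed (auto)

lemma ci_series:
  assumes r: "0 < r" and int: "\<And>k. T k contour_integrable_on circlepath z r"
    and bnd: "\<And>k w. w \<in> sphere z r \<Longrightarrow> norm (T k w) \<le> M k" and M: "summable M"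
    and sm: "\<And>w. w \<in> sphere z r \<Longrightarrow> (\<lambda>k. T k w) sums G w"
  shows "(\<lambda>k. contour_integral (circlepath z r) (T k)) sums contour_integral (circlepath z r) G"
proof -
  have ul: "uniform_limit (sphere z r) (\<lambda>n x. \<Sum>i<n. T i x) (\<lambda>x. suminf (\<lambda>i. T i x)) sequentially"
    by (rule Weierstrass_m_test[OF bnd M])
  have ev: "\<forall>\<^sub>F n in sequentially. (\<lambda>x. \<Sum>i<n. T i x) contour_integrable_on circlepath z r"
    by (intro always_eventually allI contour_integrable_sum) (auto intro: int)
  have lim: "((\<lambda>n. contour_integral (circlepath z r) (\<lambda>x. \<Sum>i<n. T i x)) \<longlongrightarrow>
      contour_integral (circlepath z r) (\<lambda>x. suminf (\<lambda>i. T i x))) sequentially"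
    by (rule contour_integral_uniform_limit_circlepath(2)[OF ev ul _ r]) simp
  have eq1: "contour_integral (circlepath z r) (\<lambda>x. \<Sum>i<n. T i x) = (\<Sum>i<n. contour_integral (circlepath z r) (T i))" for n
    by (rule contour_integral_sum) (auto intro: int)
  have eq2: "contour_integral (circlepath z r) (\<lambda>x. suminf (\<lambda>i. T i x)) = contour_integral (circlepath z r) G"
  proof (rule contour_integral_eq)
    fix x assume "x \<in> path_image (circlepath z r)"
    then have "x \<in> sphere z r" using r by simp
    then show "(\<Sum>i. T i x) = G x" using sm sums_unique by metis
  qed
  show ?thesis using lim unfolding sums_def eq1 eq2 .
qed

definition ap :: "(complex \<Rightarrow> complex) \<Rightarrow> nat \<Rightarrow> complex" where
  "ap f k = contour_integral (circlepath 0 1) (\<lambda>w. f w / w ^ Suc k) / (2 * of_real pi * \<i>)"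
definition an :: "(complex \<Rightarrow> complex) \<Rightarrow> nat \<Rightarrow> complex" where
  "an f k = contour_integral (circlepath 0 1) (\<lambda>w. f w * w ^ k) / (2 * of_real pi * \<i>)"

lemma bound_compact:
  assumes f: "f holomorphic_on -{0}" and K: "compact K" "K \<subseteq> -{0}"
  shows "\<exists>B. \<forall>w\<in>K. norm (f w) \<le> B"
proof -
  have "continuous_on K f"
    using holomorphic_on_imp_continuous_on[OF f] K continuous_on_subset by blast
  then have "compact (f ` K)" using K compact_continuous_image by blast
  then have "bounded (f ` K)" by (rule compact_imp_bounded)
  then show ?thesis by (auto simp: bounded_iff)
qed

lemma ci_radius':
  assumes g: "g holomorphic_on -{0}" and r: "0 < r"
  shows "contour_integral (circlepath 0 r) g = contour_integral (circlepath 0 1) g"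
  using ci_radius[OF g r] by simp

lemma laurent:
  assumes f: "f holomorphic_on -{0}" and z: "z \<noteq> 0"
  shows "(\<lambda>k. ap f k * z ^ k + an f k / z ^ Suc k) sums f z"
proof -
  define R where "R = 2 * cmod z"
  define r where "r = cmod z / 2"
  have R: "R > 0" and r: "r > 0" using z by (auto simp: R_def r_def)
  have os: "open (-{0::complex})" by auto
  define h where "h = (\<lambda>w. if w = z then deriv f z else (f w - f z) / (w - z))"
  have hh: "h holomorphic_on -{0}" unfolding h_def by (rule pole_lemma_open[OF f os])
  have hR: "h contour_integrable_on circlepath 0 R" and hr: "h contour_integrable_on circlepath 0 r"
    by (rule contour_integrable_holomorphic_simple[OF hh os]; use R r in \<open>auto\<close>)+
  have hRr: "contour_integral (circlepath 0 R) h = contour_integral (circlepath 0 r) h"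
    by (rule ci_radius[OF hh R r])
  have zR: "z \<notin> path_image (circlepath 0 R)" and zr: "z \<notin> path_image (circlepath 0 r)"
    using R r z by (auto simp: R_def r_def)
  have wR: "winding_number (circlepath 0 R) z = 1"
    by (rule winding_number_circlepath) (use z in \<open>auto simp: R_def\<close>)
  have wr: "winding_number (circlepath 0 r) z = 0"
    by (rule winding_number_zero_outside[of _ "cball 0 r"]) (use r z in \<open>auto simp: r_def\<close>)
  have iR: "((\<lambda>w. 1 / (w - z)) has_contour_integral (2 * of_real pi * \<i>)) (circlepath 0 R)"
    using has_contour_integral_winding_number[OF valid_path_circlepath zR] wR by simp
  have ir: "((\<lambda>w. 1 / (w - z)) has_contour_integral 0) (circlepath 0 r)"
    using has_contour_integral_winding_number[OF valid_path_circlepath zr] wr by simp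
  have IR: "((\<lambda>w. f w / (w - z)) has_contour_integral
      (contour_integral (circlepath 0 R) h + f z * (2 * of_real pi * \<i>))) (circlepath 0 R)"
  proof (rule has_contour_integral_eq)
    show "((\<lambda>w. h w + f z * (1 / (w - z))) has_contour_integral
      (contour_integral (circlepath 0 R) h + f z * (2 * of_real pi * \<i>))) (circlepath 0 R)"
      by (intro has_contour_integral_add has_contour_integral_lmul iR has_contour_integral_integral hR)
    fix w assume "w \<in> path_image (circlepath 0 R)"
    then have "w \<noteq> z" using zR by auto
    then show "h w + f z * (1 / (w - z)) = f w / (w - z)"
      by (simp add: h_def diff_divide_distrib)
  qed
  have Ir0: "((\<lambda>w. f w / (w - z)) has_contour_integral
      (contour_integral (circlepath 0 r) h + f z * 0)) (circlepath 0 r)"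
  proof (rule has_contour_integral_eq)
    show "((\<lambda>w. h w + f z * (1 / (w - z))) has_contour_integral
      (contour_integral (circlepath 0 r) h + f z * 0)) (circlepath 0 r)"
      by (intro has_contour_integral_add has_contour_integral_lmul ir has_contour_integral_integral hr)
    fix w assume "w \<in> path_image (circlepath 0 r)"
    then have "w \<noteq> z" using zr by auto
    then show "h w + f z * (1 / (w - z)) = f w / (w - z)"
      by (simp add: h_def diff_divide_distrib)
  qed
  then have Ir: "((\<lambda>w. f w / (w - z)) has_contour_integral
      (contour_integral (circlepath 0 r) h)) (circlepath 0 r)" by simp
  obtain BR where BR: "\<forall>w\<in>sphere 0 R. norm (f w) \<le> BR"
    using bound_compact[OF f, of "sphere 0 R"] R by auto
  obtain Br where Br: "\<forall>w\<in>sphere 0 r. norm (f w) \<le> Br"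
    using bound_compact[OF f, of "sphere 0 r"] r by auto
  have sR: "(\<lambda>k. contour_integral (circlepath 0 R) (\<lambda>w. f w * z ^ k / w ^ Suc k)) sums
       contour_integral (circlepath 0 R) (\<lambda>w. f w / (w - z))"
  proof (rule ci_series[OF R])
    fix k show "(\<lambda>w. f w * z ^ k / w ^ Suc k) contour_integrable_on circlepath 0 R"
      by (rule contour_integrable_holomorphic_simple[OF _ os]) (use R in \<open>auto intro!: holomorphic_intros f\<close>)
  next
    fix k and w :: complex assume w: "w \<in> sphere 0 R"
    then have nw: "norm w = R" by simp
    have "0 \<le> BR" using BR w by (meson norm_ge_zero order_trans)
    have "norm (f w * z ^ k / w ^ Suc k) = norm (f w) * (cmod z / R) ^ k / R"
      using R by (simp add: norm_mult norm_divide norm_power nw power_divide)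
    also have "\<dots> \<le> BR * (1/2) ^ k / R"
      using BR w R z \<open>0 \<le> BR\<close> by (intro divide_right_mono mult_mono power_mono) (auto simp: R_def)
    finally show "norm (f w * z ^ k / w ^ Suc k) \<le> BR * (1/2) ^ k / R" .
  next
    show "summable (\<lambda>k. BR * (1/2) ^ k / R)"
      by (intro summable_divide summable_mult summable_geometric) simp
  next
    fix w :: complex assume w: "w \<in> sphere 0 R"
    then have w0: "w \<noteq> 0" and nzw: "norm (z / w) < 1" using R z by (auto simp: R_def norm_divide)
    have "(\<lambda>k. (f w / w) * (z / w) ^ k) sums ((f w / w) * (1 / (1 - z / w)))"
      by (intro sums_mult geometric_sums nzw)
    moreover have "(f w / w) * (1 / (1 - z / w)) = f w / (w - z)"
      using w0 zR w by (auto simp: field_simps)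
    moreover have "\<And>k. (f w / w) * (z / w) ^ k = f w * z ^ k / w ^ Suc k"
      by (simp add: power_divide)
    ultimately show "(\<lambda>k. f w * z ^ k / w ^ Suc k) sums (f w / (w - z))"
      by (simp only:)
  qed
  have sr: "(\<lambda>k. contour_integral (circlepath 0 r) (\<lambda>w. f w * w ^ k / z ^ Suc k)) sums
       contour_integral (circlepath 0 r) (\<lambda>w. - (f w / (w - z)))"
  proof (rule ci_series[OF r])
    fix k show "(\<lambda>w. f w * w ^ k / z ^ Suc k) contour_integrable_on circlepath 0 r"
      by (rule contour_integrable_holomorphic_simple[OF _ os]) (use r in \<open>auto intro!: holomorphic_intros f holomorphic_on_subset[OF f]\<close>)
  next
    fix k and w :: complex assume w: "w \<in> sphere 0 r"
    then have nw: "norm w = r" by simp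
    have "0 \<le> Br" using Br w by (meson norm_ge_zero order_trans)
    have "norm (f w * w ^ k / z ^ Suc k) = norm (f w) * (r / cmod z) ^ k / cmod z"
      using r z by (simp add: norm_mult norm_divide norm_power nw power_divide)
    also have "\<dots> \<le> Br * (1/2) ^ k / cmod z"
      using Br w r z \<open>0 \<le> Br\<close> by (intro divide_right_mono mult_mono power_mono) (auto simp: r_def)
    finally show "norm (f w * w ^ k / z ^ Suc k) \<le> Br * (1/2) ^ k / cmod z" .
  next
    show "summable (\<lambda>k. Br * (1/2) ^ k / cmod z)"
      by (intro summable_divide summable_mult summable_geometric) simp
  next
    fix w :: complex assume w: "w \<in> sphere 0 r"
    then have nzw: "norm (w / z) < 1" using r z by (auto simp: r_def norm_divide divide_simps) (smt (verit) zero_less_norm_iff)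
    have "(\<lambda>k. (f w / z) * (w / z) ^ k) sums ((f w / z) * (1 / (1 - w / z)))"
      by (intro sums_mult geometric_sums nzw)
    moreover have "(f w / z) * (1 / (1 - w / z)) = - (f w / (w - z))"
      using z w zr by (cases "w = z") (auto simp: field_simps)
    moreover have "\<And>k. (f w / z) * (w / z) ^ k = f w * w ^ k / z ^ Suc k"
      by (simp add: power_divide)
    ultimately show "(\<lambda>k. f w * w ^ k / z ^ Suc k) sums (- (f w / (w - z)))"
      by (simp only:)
  qed
  have eR: "contour_integral (circlepath 0 R) (\<lambda>w. f w * z ^ k / w ^ Suc k) = (2 * of_real pi * \<i>) * (ap f k * z ^ k)" for k
  proof -
    have "contour_integral (circlepath 0 R) (\<lambda>w. f w * z ^ k / w ^ Suc k) =
          contour_integral (circlepath 0 R) (\<lambda>w. z ^ k * (f w / w ^ Suc k))"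
      by (simp add: field_simps)
    also have "\<dots> = z ^ k * contour_integral (circlepath 0 R) (\<lambda>w. f w / w ^ Suc k)"
      by (rule contour_integral_lmul) (rule contour_integrable_holomorphic_simple[OF _ os], use R in \<open>auto intro!: holomorphic_intros f\<close>)
    also have "\<dots> = z ^ k * contour_integral (circlepath 0 1) (\<lambda>w. f w / w ^ Suc k)"
      by (subst ci_radius'[OF _ R]) (auto intro!: holomorphic_intros f)
    finally show ?thesis by (simp add: ap_def)
  qed
  have er: "contour_integral (circlepath 0 r) (\<lambda>w. f w * w ^ k / z ^ Suc k) = (2 * of_real pi * \<i>) * (an f k / z ^ Suc k)" for k
  proof -
    have e1: "contour_integral (circlepath 0 r) (\<lambda>w. f w * w ^ k / z ^ Suc k) = contour_integral (circlepath 0 r) (\<lambda>w. f w * w ^ k) / z ^ Suc k"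
      by (rule contour_integral_div) (rule contour_integrable_holomorphic_simple[OF _ os], use r in \<open>auto intro!: holomorphic_intros f\<close>)
    have e2: "contour_integral (circlepath 0 r) (\<lambda>w. f w * w ^ k) = contour_integral (circlepath 0 1) (\<lambda>w. f w * w ^ k)"
      by (rule ci_radius'[OF _ r]) (auto intro!: holomorphic_intros f)
    show ?thesis unfolding e1 e2 an_def by simp
  qed
  have "contour_integral (circlepath 0 r) (\<lambda>w. - (f w / (w - z))) = - contour_integral (circlepath 0 r) h"
    using contour_integral_neg Ir contour_integral_unique by (metis has_contour_integral_neg)
  then have "(\<lambda>k. (2 * of_real pi * \<i>) * (ap f k * z ^ k) + (2 * of_real pi * \<i>) * (an f k / z ^ Suc k))
     sums (contour_integral (circlepath 0 R) (\<lambda>w. f w / (w - z)) - contour_integral (circlepath 0 r) h)"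
    using sums_add[OF sR sr] unfolding eR er by simp
  also have "contour_integral (circlepath 0 R) (\<lambda>w. f w / (w - z)) - contour_integral (circlepath 0 r) h
     = (2 * of_real pi * \<i>) * f z"
    using contour_integral_unique[OF IR] hRr by (simp add: algebra_simps)
  finally have "(\<lambda>k. (2 * of_real pi * \<i>) * (ap f k * z ^ k + an f k / z ^ Suc k)) sums ((2 * of_real pi * \<i>) * f z)"
    by (simp add: algebra_simps)
  moreover define c where "c = 2 * of_real pi * \<i>"
  ultimately have S: "(\<lambda>k. c * (ap f k * z ^ k + an f k / z ^ Suc k)) sums (c * f z)" by simp
  have c0: "c \<noteq> 0" by (simp add: c_def)
  from sums_mult[OF S, of "1 / c"] show ?thesis
    using c0 by (simp del: power_Suc)
qed

lemma annulus_compact: "compact (annulus_A n)"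
proof -
  have "annulus_A n = cball 0 (exp (real n)) - ball 0 (exp (- real n))"
    by (auto simp: annulus_A_def)
  then show ?thesis by (simp add: compact_diff)
qed

lemma annulus_sub: "annulus_A n \<subseteq> -{0}"
  by (auto simp: annulus_A_def)

lemma annulus_ne0: "z \<in> annulus_A n \<Longrightarrow> z \<noteq> 0"
  using annulus_sub by auto

lemma one_in_annulus: "1 \<in> annulus_A n"
  by (auto simp: annulus_A_def)

lemma annulus_nonempty: "annulus_A n \<noteq> {}"
  using one_in_annulus by auto

lemma annulus_mono: "m \<le> n \<Longrightarrow> annulus_A m \<subseteq> annulus_A n"
  by (auto simp: annulus_A_def) (meson exp_le_cancel_iff neg_le_iff_le of_nat_le_iff order_trans)+

lemma annulus_norm: "cmod w = cmod z \<Longrightarrow> z \<in> annulus_A n \<Longrightarrow> w \<in> annulus_A n"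
  by (auto simp: annulus_A_def)

lemma exists_annulus_cball:
  assumes z: "z \<noteq> 0"
  shows "\<exists>n. cball z (cmod z / 2) \<subseteq> annulus_A n"
proof -
  obtain n :: nat where n: "max (ln (3 * cmod z / 2)) (- ln (cmod z / 2)) < real n"
    using reals_Archimedean2 by blast
  have zp: "cmod z > 0" using z by simp
  have "cball z (cmod z / 2) \<subseteq> annulus_A n"
  proof
    fix w assume "w \<in> cball z (cmod z / 2)"
    then have d: "cmod (z - w) \<le> cmod z / 2" by (simp add: dist_norm)
    have lo: "cmod z / 2 \<le> cmod w" using d norm_triangle_ineq2[of z w] by linarith
    have hi: "cmod w \<le> 3 * cmod z / 2" using d norm_triangle_ineq2[of w z] by (simp add: norm_minus_commute)
    have e1: "exp (ln (cmod z / 2)) = cmod z / 2" using zp by simp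
    have e2: "exp (ln (3 * cmod z / 2)) = 3 * cmod z / 2" using zp by simp
    have "exp (- real n) < exp (ln (cmod z / 2))" using n by (subst exp_less_cancel_iff) simp
    then have "exp (- real n) \<le> cmod w" using lo e1 by linarith
    moreover have "exp (ln (3 * cmod z / 2)) < exp (real n)" using n by (subst exp_less_cancel_iff) simp
    then have "cmod w \<le> exp (real n)" using hi e2 by linarith
    ultimately show "w \<in> annulus_A n" by (simp add: annulus_A_def)
  qed
  then show ?thesis by blast
qed

lemma exists_annulus: "z \<noteq> 0 \<Longrightarrow> \<exists>n. z \<in> annulus_A n"
  using exists_annulus_cball by fastforce

lemma hol_bdd:
  assumes f: "f holomorphic_on -{0}"
  shows "bdd_above ((\<lambda>z. cmod (f z)) ` annulus_A n)"
proof -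
  obtain B where "\<forall>w\<in>annulus_A n. norm (f w) \<le> B"
    using bound_compact[OF f annulus_compact annulus_sub] by blast
  then show ?thesis by (auto simp: bdd_above_def)
qed

lemma hol_norm_ge:
  assumes f: "f holomorphic_on -{0}" and z: "z \<in> annulus_A n"
  shows "cmod (f z) \<le> hol_norm n f"
  unfolding hol_norm_def by (rule cSUP_upper[OF z hol_bdd[OF f]])

lemma hol_norm_nonneg:
  assumes f: "f holomorphic_on -{0}" shows "0 \<le> hol_norm n f"
  using hol_norm_ge[OF f one_in_annulus] norm_ge_zero order_trans by blast

lemma hol_norm_le:
  assumes "\<And>z. z \<in> annulus_A n \<Longrightarrow> cmod (f z) \<le> M"
  shows "hol_norm n f \<le> M"
  unfolding hol_norm_def by (rule cSUP_least[OF annulus_nonempty assms])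

lemma ap_bound:
  assumes f: "f holomorphic_on -{0}" and rho: "0 < \<rho>" and B: "\<And>w. cmod w = \<rho> \<Longrightarrow> cmod (f w) \<le> B"
  shows "cmod (ap f k) \<le> B / \<rho> ^ k"
proof -
  have os: "open (-{0::complex})" by auto
  have B0: "0 \<le> B" using B[of "of_real \<rho>"] rho by (smt (verit) norm_ge_zero norm_of_real)
  have int: "(\<lambda>w. f w / w ^ Suc k) contour_integrable_on circlepath 0 \<rho>"
    by (rule contour_integrable_holomorphic_simple[OF _ os]) (use rho in \<open>auto intro!: holomorphic_intros f\<close>)
  have "norm (contour_integral (circlepath 0 \<rho>) (\<lambda>w. f w / w ^ Suc k)) \<le> (B / \<rho> ^ Suc k) * (2 * pi * \<rho>)"
  proof (rule has_contour_integral_bound_circlepath[OF has_contour_integral_integral[OF int]])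
    fix w :: complex assume "norm (w - 0) = \<rho>"
    then have w: "cmod w = \<rho>" by simp
    show "norm (f w / w ^ Suc k) \<le> B / \<rho> ^ Suc k"
      using B[OF w] rho by (auto simp: norm_divide norm_mult norm_power w intro!: divide_right_mono)
  qed (use rho B0 in auto)
  also have "\<dots> = 2 * pi * (B / \<rho> ^ k)" using rho by (simp add: field_simps)
  moreover have "contour_integral (circlepath 0 \<rho>) (\<lambda>w. f w / w ^ Suc k) = contour_integral (circlepath 0 1) (\<lambda>w. f w / w ^ Suc k)"
    by (rule ci_radius'[OF _ rho]) (auto intro!: holomorphic_intros f)
  ultimately have *: "norm (contour_integral (circlepath 0 1) (\<lambda>w. f w / w ^ Suc k)) \<le> 2 * pi * (B / \<rho> ^ k)"
    by simp
  have "cmod (ap f k) = norm (contour_integral (circlepath 0 1) (\<lambda>w. f w / w ^ Suc k)) / (2 * pi)"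
    by (simp add: ap_def norm_divide norm_mult)
  also have "\<dots> \<le> B / \<rho> ^ k"
  proof (rule pos_divide_le_eq[THEN iffD2])
    show "0 < 2 * pi" by simp
    show "cmod (contour_integral (circlepath 0 1) (\<lambda>w. f w / w ^ Suc k)) \<le> B / \<rho> ^ k * (2 * pi)" using * by (simp only: mult.commute)
  qed
  finally show ?thesis .
qed

lemma an_bound:
  assumes f: "f holomorphic_on -{0}" and rho: "0 < \<rho>" and B: "\<And>w. cmod w = \<rho> \<Longrightarrow> cmod (f w) \<le> B"
  shows "cmod (an f k) \<le> B * \<rho> ^ Suc k"
proof -
  have os: "open (-{0::complex})" by auto
  have B0: "0 \<le> B" using B[of "of_real \<rho>"] rho by (smt (verit) norm_ge_zero norm_of_real)
  have int: "(\<lambda>w. f w * w ^ k) contour_integrable_on circlepath 0 \<rho>"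
    by (rule contour_integrable_holomorphic_simple[OF _ os]) (use rho in \<open>auto intro!: holomorphic_intros f holomorphic_on_subset[OF f]\<close>)
  have "norm (contour_integral (circlepath 0 \<rho>) (\<lambda>w. f w * w ^ k)) \<le> (B * \<rho> ^ k) * (2 * pi * \<rho>)"
  proof (rule has_contour_integral_bound_circlepath[OF has_contour_integral_integral[OF int]])
    fix w :: complex assume "norm (w - 0) = \<rho>"
    then have w: "cmod w = \<rho>" by simp
    show "norm (f w * w ^ k) \<le> B * \<rho> ^ k"
      using B[OF w] rho by (simp add: norm_mult norm_power w mult_right_mono)
  qed (use rho B0 in auto)
  also have "\<dots> = 2 * pi * (B * \<rho> ^ Suc k)" using rho by (simp add: field_simps)
  finally have *: "norm (contour_integral (circlepath 0 1) (\<lambda>w. f w * w ^ k)) \<le> 2 * pi * (B * \<rho> ^ Suc k)"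
    using ci_radius'[of "\<lambda>w. f w * w ^ k" \<rho>] rho by (simp add: f holomorphic_intros holomorphic_on_subset[OF f])
  have "cmod (an f k) = norm (contour_integral (circlepath 0 1) (\<lambda>w. f w * w ^ k)) / (2 * pi)"
    by (simp add: an_def norm_divide norm_mult)
  also have "\<dots> \<le> B * \<rho> ^ Suc k"
  proof (rule pos_divide_le_eq[THEN iffD2])
    show "0 < 2 * pi" by simp
    show "cmod (contour_integral (circlepath 0 1) (\<lambda>w. f w * w ^ k)) \<le> B * \<rho> ^ Suc k * (2 * pi)" using * by (simp only: mult.commute)
  qed
  finally show ?thesis .
qed

lemma ap_est:
  assumes f: "f holomorphic_on -{0}"
  shows "cmod (ap f k) \<le> hol_norm m f * exp (- (real m * real k))"
proof -
  have "cmod (ap f k) \<le> hol_norm m f / exp (real m) ^ k"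
    by (rule ap_bound[OF f]) (auto intro!: hol_norm_ge[OF f] simp: annulus_A_def)
  also have "exp (real m) ^ k = exp (real m * real k)"
    by (metis exp_of_nat_mult mult.commute)
  finally show ?thesis by (simp add: exp_minus divide_inverse)
qed

lemma an_est:
  assumes f: "f holomorphic_on -{0}"
  shows "cmod (an f k) \<le> hol_norm m f * exp (- (real m * real k))"
proof -
  have "cmod (an f k) \<le> hol_norm m f * exp (- real m) ^ Suc k"
    by (rule an_bound[OF f]) (auto intro!: hol_norm_ge[OF f] simp: annulus_A_def)
  also have "exp (- real m) ^ Suc k = exp (- (real m * real (Suc k)))"
    by (metis exp_of_nat_mult mult.commute mult_minus_left)
  also have "\<dots> \<le> exp (- (real m * real k))"
    using mult_left_mono[of "real k" "1 + real k" "real m"] by simp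
  finally show ?thesis
    using hol_norm_nonneg[OF f, of m] by (meson mult_left_mono order_trans) 
qed

lemma holo_from_annuli:
  assumes F: "\<And>N. F N holomorphic_on -{0}"
    and ul: "\<And>n. uniform_limit (annulus_A n) F g sequentially"
  shows "g holomorphic_on -{0}"
proof -
  have "g analytic_on -{0}"
    unfolding analytic_on_def
  proof
    fix z :: complex assume "z \<in> -{0}"
    then have z: "z \<noteq> 0" by simp
    obtain n where n: "cball z (cmod z / 2) \<subseteq> annulus_A n" using exists_annulus_cball[OF z] by blast
    have "cball z (cmod z / 2) \<subseteq> -{0}" using n annulus_sub by blast
    then have ev: "\<forall>\<^sub>F N in sequentially. continuous_on (cball z (cmod z / 2)) (F N) \<and> F N holomorphic_on ball z (cmod z / 2)"
    proof (intro always_eventually allI conjI)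
      fix N
      have "F N holomorphic_on cball z (cmod z / 2)" using F holomorphic_on_subset \<open>cball z (cmod z / 2) \<subseteq> -{0}\<close> by blast
      then show "continuous_on (cball z (cmod z / 2)) (F N)" by (rule holomorphic_on_imp_continuous_on)
      show "F N holomorphic_on ball z (cmod z / 2)" using F holomorphic_on_subset \<open>cball z (cmod z / 2) \<subseteq> -{0}\<close> ball_subset_cball by blast
    qed
    have "uniform_limit (cball z (cmod z / 2)) F g sequentially"
      by (rule uniform_limit_on_subset[OF ul n])
    then have "g holomorphic_on ball z (cmod z / 2)"
      by (rule holomorphic_uniform_limit[OF ev]) auto
    then show "\<exists>e>0. g holomorphic_on ball z e" using z by (intro exI[of _ "cmod z / 2"]) auto
  qed
  then show ?thesis by (rule analytic_imp_holomorphic)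
qed

lemma scaleR_fun_apply [simp]: "(a *\<^sub>R f) x = a *\<^sub>R f x"
  by (simp add: scaleR_fun_def)

definition om :: "nat \<Rightarrow> complex" where "om k = exp (2 * pi * \<i> / of_nat k)"

lemma Hol_kl_iff: "f \<in> Hol_kl k l \<longleftrightarrow> f holomorphic_on -{0} \<and> f 0 = 0 \<and>
   (\<forall>z. z \<noteq> 0 \<longrightarrow> f (om k * z) = om k ^ l * f z)"
  by (simp add: Hol_kl_def om_def)

lemma Hol_holo: "f \<in> Hol_kl k l \<Longrightarrow> f holomorphic_on -{0}"
  by (simp add: Hol_kl_iff)

lemma holo_scaleR: "f holomorphic_on S \<Longrightarrow> (\<lambda>z. a *\<^sub>R f z) holomorphic_on S"
  by (simp add: scaleR_conv_of_real holomorphic_intros)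

lemma Hol_add: "f \<in> Hol_kl k l \<Longrightarrow> g \<in> Hol_kl k l \<Longrightarrow> f + g \<in> Hol_kl k l"
  by (auto simp: Hol_kl_iff holomorphic_intros algebra_simps plus_fun_def fun_diff_def)

lemma Hol_scale: "f \<in> Hol_kl k l \<Longrightarrow> a *\<^sub>R f \<in> Hol_kl k l"
  by (auto simp: Hol_kl_iff holo_scaleR scaleR_conv_of_real algebra_simps scaleR_fun_def holomorphic_intros)

lemma Hol_zero: "0 \<in> Hol_kl k l"
  by (auto simp: Hol_kl_iff holomorphic_intros zero_fun_def)

lemma Hol_diff: "f \<in> Hol_kl k l \<Longrightarrow> g \<in> Hol_kl k l \<Longrightarrow> f - g \<in> Hol_kl k l"
  by (auto simp: Hol_kl_iff holomorphic_intros algebra_simps plus_fun_def fun_diff_def)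

lemma Hol_lin: "lin_subspace (Hol_kl k l)"
  unfolding lin_subspace_def using Hol_add Hol_scale Hol_zero by blast

lemma hol_norm_scale:
  assumes f: "f holomorphic_on -{0}"
  shows "hol_norm n (a *\<^sub>R f) = \<bar>a\<bar> * hol_norm n f"
proof (rule antisym)
  show "hol_norm n (a *\<^sub>R f) \<le> \<bar>a\<bar> * hol_norm n f"
    by (rule hol_norm_le) (auto intro!: mult_left_mono hol_norm_ge[OF f])
next
  show "\<bar>a\<bar> * hol_norm n f \<le> hol_norm n (a *\<^sub>R f)"
  proof (cases "a = 0")
    case True
    then show ?thesis using hol_norm_nonneg[of "a *\<^sub>R f" n] holo_scaleR[OF f, of a]
      by (simp add: scaleR_fun_def)
  next
    case False
    have fa: "(a *\<^sub>R f) holomorphic_on -{0}" using holo_scaleR[OF f, of a] by (simp add: scaleR_fun_def)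
    have "hol_norm n f \<le> hol_norm n (a *\<^sub>R f) / \<bar>a\<bar>"
    proof (rule hol_norm_le)
      fix z assume z: "z \<in> annulus_A n"
      have "cmod (f z) = cmod ((a *\<^sub>R f) z) / \<bar>a\<bar>" using False by simp
      also have "\<dots> \<le> hol_norm n (a *\<^sub>R f) / \<bar>a\<bar>"
        by (intro divide_right_mono hol_norm_ge[OF fa z]) simp
      finally show "cmod (f z) \<le> hol_norm n (a *\<^sub>R f) / \<bar>a\<bar>" .
    qed
    then show ?thesis using False by (simp add: field_simps)
  qed
qed

lemma hol_seminorm: "seminorm_on (Hol_kl k l) (hol_norm n)"
  unfolding seminorm_on_def
proof (intro conjI ballI allI)
  fix f assume "f \<in> Hol_kl k l"
  then show "0 \<le> hol_norm n f" by (intro hol_norm_nonneg Hol_holo)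
next
  fix f g assume f: "f \<in> Hol_kl k l" and g: "g \<in> Hol_kl k l"
  show "hol_norm n (f + g) \<le> hol_norm n f + hol_norm n g"
  proof (rule hol_norm_le)
    fix z assume z: "z \<in> annulus_A n"
    have "cmod ((f + g) z) \<le> cmod (f z) + cmod (g z)" by (simp add: norm_triangle_ineq)
    also have "\<dots> \<le> hol_norm n f + hol_norm n g"
      by (rule add_mono[OF hol_norm_ge[OF Hol_holo[OF f] z] hol_norm_ge[OF Hol_holo[OF g] z]])
    finally show "cmod ((f + g) z) \<le> hol_norm n f + hol_norm n g" .
  qed
next
  fix a and f assume "f \<in> Hol_kl k l"
  then show "hol_norm n (a *\<^sub>R f) = \<bar>a\<bar> * hol_norm n f" by (intro hol_norm_scale Hol_holo)
qed

lemma hol_norm_mono: "f holomorphic_on -{0} \<Longrightarrow> m \<le> n \<Longrightarrow> hol_norm m f \<le> hol_norm n f"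
  by (rule hol_norm_le) (use annulus_mono in \<open>blast intro: hol_norm_ge\<close>)

lemma graded_Hol: "graded_frechet (Hol_kl k l) hol_norm"
  unfolding graded_frechet_def
proof (intro conjI allI ballI impI)
  show "lin_subspace (Hol_kl k l)" by (rule Hol_lin)
  fix n show "seminorm_on (Hol_kl k l) (hol_norm n)" by (rule hol_seminorm)
next
  fix n f assume "f \<in> Hol_kl k l"
  then show "hol_norm n f \<le> hol_norm (Suc n) f" by (intro hol_norm_mono Hol_holo) auto
next
  fix f assume f: "f \<in> Hol_kl k l" and z: "\<forall>n. hol_norm n f = 0"
  show "f = 0"
  proof
    fix w show "f w = 0 w"
    proof (cases "w = 0")
      case True then show ?thesis using f by (simp add: Hol_kl_iff)
    next
      case False
      then obtain n where "w \<in> annulus_A n" using exists_annulus by blast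
      then have "cmod (f w) \<le> 0" using hol_norm_ge[OF Hol_holo[OF f]] z by metis
      then show ?thesis by simp
    qed
  qed
next
  fix X :: "nat \<Rightarrow> complex \<Rightarrow> complex"
  assume "(\<forall>m. X m \<in> Hol_kl k l) \<and> (\<forall>n. \<forall>e>0. \<exists>M. \<forall>i\<ge>M. \<forall>j\<ge>M. hol_norm n (X i - X j) < e)"
  then have X: "\<And>m. X m \<in> Hol_kl k l" and C: "\<And>n e. e > 0 \<Longrightarrow> \<exists>M. \<forall>i\<ge>M. \<forall>j\<ge>M. hol_norm n (X i - X j) < e"
    by auto
  have ptC: "\<exists>M. \<forall>i\<ge>M. \<forall>j\<ge>M. cmod (X i z - X j z) < e" if z: "z \<in> annulus_A n" and e: "e > 0" for z n e
  proof -
    obtain M where M: "\<forall>i\<ge>M. \<forall>j\<ge>M. hol_norm n (X i - X j) < e" using C[OF e] by blast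
    have "cmod (X i z - X j z) < e" if "i \<ge> M" "j \<ge> M" for i j
      using hol_norm_ge[OF Hol_holo[OF Hol_diff[OF X X]] z, of i j] M that by (metis minus_apply order_le_less_trans)
    then show ?thesis by blast
  qed
  define f where "f = (\<lambda>z. lim (\<lambda>i. X i z))"
  have conv: "(\<lambda>i. X i z) \<longlonglongrightarrow> f z" for z
  proof (cases "z = 0")
    case True
    then have "(\<lambda>i. X i z) = (\<lambda>i. 0)" using X by (simp add: Hol_kl_iff)
    then show ?thesis by (simp add: f_def limI)
  next
    case False
    then obtain n where n: "z \<in> annulus_A n" using exists_annulus by blast
    have "Cauchy (\<lambda>i. X i z)"
      unfolding Cauchy_def dist_norm using ptC[OF n] by blast
    then show ?thesis unfolding f_def by (simp add: Cauchy_convergent_iff convergent_LIMSEQ_iff)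
  qed
  have unif: "\<exists>M. \<forall>i\<ge>M. \<forall>z\<in>annulus_A n. cmod (X i z - f z) \<le> e" if e: "e > 0" for n e
  proof -
    obtain M where M: "\<forall>i\<ge>M. \<forall>j\<ge>M. hol_norm n (X i - X j) < e" using C[OF e] by blast
    have "cmod (X i z - f z) \<le> e" if i: "i \<ge> M" and z: "z \<in> annulus_A n" for i z
    proof -
      have "((\<lambda>j. cmod (X i z - X j z)) \<longlongrightarrow> cmod (X i z - f z)) sequentially"
        by (intro tendsto_intros conv)
      moreover have "\<forall>\<^sub>F j in sequentially. cmod (X i z - X j z) \<le> e"
        unfolding eventually_sequentially
        using hol_norm_ge[OF Hol_holo[OF Hol_diff[OF X X]] z, of i] M i
        by (metis less_imp_le minus_apply order_trans)
      ultimately show ?thesis by (rule tendsto_upperbound) simp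
    qed
    then show ?thesis by blast
  qed
  have ul: "uniform_limit (annulus_A n) X f sequentially" for n
  proof (rule uniform_limitI)
    fix e :: real assume e: "e > 0"
    obtain M where M: "\<forall>i\<ge>M. \<forall>z\<in>annulus_A n. cmod (X i z - f z) \<le> e / 2"
      using unif[of "e/2" n] e by auto
    show "\<forall>\<^sub>F i in sequentially. \<forall>z\<in>annulus_A n. dist (X i z) (f z) < e"
      unfolding eventually_sequentially dist_norm using M e by (smt (verit, best) field_sum_of_halves)
  qed
  have fH: "f \<in> Hol_kl k l"
    unfolding Hol_kl_iff
  proof (intro conjI allI impI)
    show "f holomorphic_on -{0}" by (rule holo_from_annuli[OF Hol_holo[OF X] ul])
    show "f 0 = 0" using conv[of 0] X by (simp add: Hol_kl_iff LIMSEQ_const_iff)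
    fix z :: complex assume z: "z \<noteq> 0"
    have "(\<lambda>i. X i (om k * z)) \<longlonglongrightarrow> om k ^ l * f z"
      using tendsto_mult_left[OF conv[of z], of "om k ^ l"] X z by (simp add: Hol_kl_iff)
    then show "f (om k * z) = om k ^ l * f z" using conv[of "om k * z"] LIMSEQ_unique by blast
  qed
  show "\<exists>f\<in>Hol_kl k l. \<forall>n. \<forall>e>0. \<exists>M. \<forall>i\<ge>M. hol_norm n (X i - f) < e"
  proof (intro bexI[OF _ fH] allI impI)
    fix n and e :: real assume e: "e > 0"
    obtain M where M: "\<forall>i\<ge>M. \<forall>z\<in>annulus_A n. cmod (X i z - f z) \<le> e / 2"
      using unif[of "e/2" n] e by auto
    have "hol_norm n (X i - f) \<le> e / 2" if "i \<ge> M" for i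
      by (rule hol_norm_le) (use M that in simp)
    then show "\<exists>M. \<forall>i\<ge>M. hol_norm n (X i - f) < e" using e by (smt (verit, best) field_sum_of_halves)
  qed
qed

definition V4 :: "(nat \<Rightarrow> real) set" where "V4 = {v. \<forall>i\<ge>4. v i = 0}"
definition N4 :: "(nat \<Rightarrow> real) \<Rightarrow> real" where "N4 v = \<bar>v 0\<bar> + \<bar>v 1\<bar> + \<bar>v 2\<bar> + \<bar>v 3\<bar>"

lemma N4_coord: "i < 4 \<Longrightarrow> \<bar>v i\<bar> \<le> N4 v"
  by (auto simp: N4_def less_Suc_eq numeral_eq_Suc)

lemma banach_V4: "banach_on V4 N4"
  unfolding banach_on_def
proof (intro conjI allI impI)
  show "lin_subspace V4"
    by (auto simp: lin_subspace_def V4_def)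
  show "seminorm_on V4 N4"
    unfolding seminorm_on_def
  proof (intro conjI ballI allI)
    fix x y :: "nat \<Rightarrow> real"
    show "N4 (x + y) \<le> N4 x + N4 y"
      using abs_triangle_ineq[of "x 0" "y 0"] abs_triangle_ineq[of "x 1" "y 1"]
        abs_triangle_ineq[of "x 2" "y 2"] abs_triangle_ineq[of "x 3" "y 3"]
      unfolding N4_def plus_fun_apply by linarith
  qed (auto simp: N4_def abs_mult algebra_simps)
  show "\<forall>x\<in>V4. N4 x = 0 \<longrightarrow> x = 0"
  proof (intro ballI impI)
    fix x assume x: "x \<in> V4" and n: "N4 x = 0"
    show "x = 0"
    proof
      fix i show "x i = 0 i"
        using x n by (cases "i < 4") (auto simp: V4_def N4_def less_Suc_eq numeral_eq_Suc)
    qed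
  qed
next
  fix X :: "nat \<Rightarrow> nat \<Rightarrow> real"
  assume "(\<forall>m. X m \<in> V4) \<and> (\<forall>e>0. \<exists>M. \<forall>m\<ge>M. \<forall>n\<ge>M. N4 (X m - X n) < e)"
  then have X: "\<And>m. X m \<in> V4" and C: "\<And>e. e > 0 \<Longrightarrow> \<exists>M. \<forall>m\<ge>M. \<forall>n\<ge>M. N4 (X m - X n) < e" by auto
  define x where "x = (\<lambda>i. if i < 4 then lim (\<lambda>m. X m i) else 0)"
  have conv: "(\<lambda>m. X m i) \<longlonglongrightarrow> x i" if i: "i < 4" for i
  proof -
    have "Cauchy (\<lambda>m. X m i)"
      unfolding Cauchy_def dist_real_def
    proof (intro allI impI)
      fix e :: real assume "e > 0"
      then obtain M where M: "\<forall>m\<ge>M. \<forall>n\<ge>M. N4 (X m - X n) < e" using C by blast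
      have "\<bar>X m i - X n i\<bar> < e" if "m \<ge> M" "n \<ge> M" for m n
        using N4_coord[OF i, of "X m - X n"] M that by (metis minus_apply order_le_less_trans)
      then show "\<exists>M. \<forall>m\<ge>M. \<forall>n\<ge>M. \<bar>X m i - X n i\<bar> < e" by blast
    qed
    then show ?thesis using i by (simp add: x_def Cauchy_convergent_iff convergent_LIMSEQ_iff)
  qed
  have xV: "x \<in> V4" by (simp add: V4_def x_def)
  show "\<exists>x\<in>V4. \<forall>e>0. \<exists>M. \<forall>n\<ge>M. N4 (X n - x) < e"
  proof (intro bexI[OF _ xV] allI impI)
    fix e :: real assume e: "e > 0"
    have ev: "\<forall>\<^sub>F n in sequentially. \<bar>X n i - x i\<bar> < e / 4" if "i < 4" for i
    proof -
      have "((\<lambda>n. X n i - x i) \<longlongrightarrow> 0) sequentially"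
        using conv[OF that] by (simp add: LIM_zero)
      from tendstoD[OF this, of "e / 4"] have "\<forall>\<^sub>F n in sequentially. dist (X n i - x i) 0 < e / 4" using e by simp
      then show ?thesis by (simp add: dist_real_def)
    qed
    have e0: "\<forall>\<^sub>F n in sequentially. \<bar>X n 0 - x 0\<bar> < e / 4" by (rule ev) simp
    have e1: "\<forall>\<^sub>F n in sequentially. \<bar>X n 1 - x 1\<bar> < e / 4" by (rule ev) simp
    have e2: "\<forall>\<^sub>F n in sequentially. \<bar>X n 2 - x 2\<bar> < e / 4" by (rule ev) simp
    have e3: "\<forall>\<^sub>F n in sequentially. \<bar>X n 3 - x 3\<bar> < e / 4" by (rule ev) simp
    have "\<forall>\<^sub>F n in sequentially. N4 (X n - x) < e"
      using eventually_conj[OF e0 eventually_conj[OF e1 eventually_conj[OF e2 e3]]]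
      by (rule eventually_mono) (simp add: N4_def)
    then show "\<exists>M. \<forall>n\<ge>M. N4 (X n - x) < e" by (simp add: eventually_sequentially)
  qed
qed

definition enc :: "complex \<Rightarrow> complex \<Rightarrow> nat \<Rightarrow> real" where
  "enc c d = (\<lambda>i. if i = 0 then Re c else if i = 1 then Im c else if i = 2 then Re d else if i = 3 then Im d else 0)"
definition d1 :: "(nat \<Rightarrow> real) \<Rightarrow> complex" where "d1 v = Complex (v 0) (v 1)"
definition d2 :: "(nat \<Rightarrow> real) \<Rightarrow> complex" where "d2 v = Complex (v 2) (v 3)"

lemma enc_V4: "enc c d \<in> V4" by (simp add: enc_def V4_def)
lemma d1_enc [simp]: "d1 (enc c d) = c" by (simp add: d1_def enc_def complex_surj)
lemma d2_enc [simp]: "d2 (enc c d) = d" by (simp add: d2_def enc_def complex_surj)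
lemma N4_enc: "N4 (enc c d) \<le> 2 * cmod c + 2 * cmod d"
  using abs_Re_le_cmod[of c] abs_Im_le_cmod[of c] abs_Re_le_cmod[of d] abs_Im_le_cmod[of d]
  by (simp add: N4_def enc_def)
lemma enc_add: "enc (a + b) (c + d) = enc a c + enc b d"
  by (auto simp: enc_def fun_eq_iff)
lemma enc_scale: "enc (of_real r * a) (of_real r * c) = r *\<^sub>R enc a c"
  by (auto simp: enc_def fun_eq_iff)
lemma d1_bound: "cmod (d1 v) \<le> \<bar>v 0\<bar> + \<bar>v 1\<bar>" using cmod_le[of "d1 v"] by (simp add: d1_def)
lemma d2_bound: "cmod (d2 v) \<le> \<bar>v 2\<bar> + \<bar>v 3\<bar>" using cmod_le[of "d2 v"] by (simp add: d2_def)
lemma d12_bound: "cmod (d1 v) + cmod (d2 v) \<le> N4 v"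
  using d1_bound[of v] d2_bound[of v] by (simp add: N4_def)
lemma d1_add: "d1 (v + w) = d1 v + d1 w" by (simp add: d1_def complex_eq_iff)
lemma d2_add: "d2 (v + w) = d2 v + d2 w" by (simp add: d2_def complex_eq_iff)
lemma d1_scale: "d1 (r *\<^sub>R v) = of_real r * d1 v" by (simp add: d1_def complex_eq_iff)
lemma d2_scale: "d2 (r *\<^sub>R v) = of_real r * d2 v" by (simp add: d2_def complex_eq_iff)
lemma N4_nonneg: "0 \<le> N4 v" by (simp add: N4_def)

definition phi :: "(complex \<Rightarrow> complex) \<Rightarrow> nat \<Rightarrow> nat \<Rightarrow> real" where
  "phi f = (\<lambda>k. enc (ap f k) (an f k))"

lemma exp_mult_nat: "exp (x * real k) = exp x ^ k"
  by (metis exp_of_nat_mult mult.commute)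

lemma summable_expk: "summable (\<lambda>k::nat. exp (- real k))"
proof -
  have "summable (\<lambda>k::nat. exp (-1::real) ^ k)" by (rule summable_geometric) simp
  then show ?thesis using exp_mult_nat[of "-1"] by simp
qed

lemma phi_bound:
  assumes f: "f holomorphic_on -{0}"
  shows "exp (real n * real k) * N4 (phi f k) \<le> 4 * hol_norm (Suc n) f * exp (- real k)"
proof -
  let ?H = "hol_norm (Suc n) f" and ?E = "exp (- (real (Suc n) * real k))"
  have "N4 (phi f k) \<le> 2 * cmod (ap f k) + 2 * cmod (an f k)" by (simp add: phi_def N4_enc)
  also have "\<dots> \<le> 2 * (?H * ?E) + 2 * (?H * ?E)"
    using ap_est[OF f, of k "Suc n"] an_est[OF f, of k "Suc n"] by linarith
  finally have "N4 (phi f k) \<le> 4 * ?H * ?E" by simp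
  then have "exp (real n * real k) * N4 (phi f k) \<le> exp (real n * real k) * (4 * ?H * ?E)"
    by (rule mult_left_mono) simp
  also have "exp (real n * real k) * ?E = exp (- real k)"
    by (simp add: exp_add[symmetric] algebra_simps)
  then have "exp (real n * real k) * (4 * ?H * ?E) = 4 * ?H * exp (- real k)"
    by (metis mult.assoc mult.left_commute)
  finally show ?thesis .
qed

lemma ap_add: "f holomorphic_on -{0} \<Longrightarrow> g holomorphic_on -{0} \<Longrightarrow> ap (f + g) k = ap f k + ap g k"
proof -
  assume f: "f holomorphic_on -{0}" and g: "g holomorphic_on -{0}"
  have os: "open (-{0::complex})" by auto
  have i1: "(\<lambda>w. f w / w ^ Suc k) contour_integrable_on circlepath 0 1"
    by (rule contour_integrable_holomorphic_simple[OF _ os]) (auto intro!: holomorphic_intros f)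
  have i2: "(\<lambda>w. g w / w ^ Suc k) contour_integrable_on circlepath 0 1"
    by (rule contour_integrable_holomorphic_simple[OF _ os]) (auto intro!: holomorphic_intros g)
  show ?thesis
    using contour_integral_add[OF i1 i2] by (simp add: ap_def add_divide_distrib)
qed

lemma an_add: "f holomorphic_on -{0} \<Longrightarrow> g holomorphic_on -{0} \<Longrightarrow> an (f + g) k = an f k + an g k"
proof -
  assume f: "f holomorphic_on -{0}" and g: "g holomorphic_on -{0}"
  have os: "open (-{0::complex})" by auto
  have i1: "(\<lambda>w. f w * w ^ k) contour_integrable_on circlepath 0 1"
    by (rule contour_integrable_holomorphic_simple[OF _ os]) (auto intro!: holomorphic_intros f holomorphic_on_subset[OF f])
  have i2: "(\<lambda>w. g w * w ^ k) contour_integrable_on circlepath 0 1"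
    by (rule contour_integrable_holomorphic_simple[OF _ os]) (auto intro!: holomorphic_intros g holomorphic_on_subset[OF g])
  show ?thesis
    using contour_integral_add[OF i1 i2] by (simp add: an_def distrib_right add_divide_distrib)
qed

lemma ap_scale:
  assumes f: "f holomorphic_on -{0}" shows "ap (a *\<^sub>R f) k = of_real a * ap f k"
proof -
  have os: "open (-{0::complex})" by auto
  have i1: "(\<lambda>w. f w / w ^ Suc k) contour_integrable_on circlepath 0 1"
    by (rule contour_integrable_holomorphic_simple[OF _ os]) (auto intro!: holomorphic_intros f)
  have "contour_integral (circlepath 0 1) (\<lambda>w. (a *\<^sub>R f) w / w ^ Suc k) =
     contour_integral (circlepath 0 1) (\<lambda>w. of_real a * (f w / w ^ Suc k))"
    by (simp add: scaleR_conv_of_real)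
  also have "\<dots> = of_real a * contour_integral (circlepath 0 1) (\<lambda>w. f w / w ^ Suc k)"
    by (rule contour_integral_lmul[OF i1])
  finally show ?thesis by (simp add: ap_def)
qed

lemma an_scale:
  assumes f: "f holomorphic_on -{0}" shows "an (a *\<^sub>R f) k = of_real a * an f k"
proof -
  have os: "open (-{0::complex})" by auto
  have i1: "(\<lambda>w. f w * w ^ k) contour_integrable_on circlepath 0 1"
    by (rule contour_integrable_holomorphic_simple[OF _ os]) (auto intro!: holomorphic_intros f holomorphic_on_subset[OF f])
  have "contour_integral (circlepath 0 1) (\<lambda>w. (a *\<^sub>R f) w * w ^ k) =
     contour_integral (circlepath 0 1) (\<lambda>w. of_real a * (f w * w ^ k))"
    by (simp add: scaleR_conv_of_real mult.assoc)
  also have "\<dots> = of_real a * contour_integral (circlepath 0 1) (\<lambda>w. f w * w ^ k)"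
    by (rule contour_integral_lmul[OF i1])
  finally show ?thesis by (simp add: an_def)
qed

lemma phi_tame: "tame_map (Hol_kl k l) hol_norm (Sigma_space V4 N4) (Sigma_norm N4) phi"
  unfolding tame_map_def
proof (intro conjI ballI allI)
  fix f assume f: "f \<in> Hol_kl k l"
  have sm: "summable (\<lambda>j. exp (real n * real j) * N4 (phi f j))" for n
    by (rule summable_comparison_test'[where g = "\<lambda>j. 4 * hol_norm (Suc n) f * exp (- real j)" and N = 0])
       (use phi_bound[OF Hol_holo[OF f]] N4_nonneg in \<open>auto intro!: summable_mult summable_expk\<close>)
  then show "phi f \<in> Sigma_space V4 N4"
    by (simp add: Sigma_space_def phi_def enc_V4)
next
  fix f g assume f: "f \<in> Hol_kl k l" and g: "g \<in> Hol_kl k l"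
  show "phi (f + g) = phi f + phi g"
    by (simp add: phi_def fun_eq_iff ap_add an_add Hol_holo[OF f] Hol_holo[OF g] enc_add[unfolded fun_eq_iff])
next
  fix a :: real and f assume f: "f \<in> Hol_kl k l"
  show "phi (a *\<^sub>R f) = a *\<^sub>R phi f"
    by (simp add: phi_def fun_eq_iff ap_scale[OF Hol_holo[OF f]] an_scale[OF Hol_holo[OF f]] enc_scale[unfolded fun_eq_iff])
next
  show "\<exists>r b. \<exists>C::nat\<Rightarrow>real. \<forall>n\<ge>b. \<forall>f\<in>Hol_kl k l.
      Sigma_norm N4 n (phi f) \<le> C n * hol_norm (n + r) f"
  proof (intro exI allI impI ballI)
    fix n and f assume f: "f \<in> Hol_kl k l"
    have sm: "summable (\<lambda>j. exp (real n * real j) * N4 (phi f j))"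
      by (rule summable_comparison_test'[where g = "\<lambda>j. 4 * hol_norm (Suc n) f * exp (- real j)" and N = 0])
         (use phi_bound[OF Hol_holo[OF f]] N4_nonneg in \<open>auto intro!: summable_mult summable_expk\<close>)
    have "Sigma_norm N4 n (phi f) \<le> (\<Sum>j. 4 * hol_norm (Suc n) f * exp (- real j))"
      unfolding Sigma_norm_def
      by (rule suminf_le[OF _ sm]) (auto intro!: phi_bound[OF Hol_holo[OF f]] summable_mult summable_expk)
    also have "\<dots> = (4 * (\<Sum>j. exp (- real j))) * hol_norm (n + 1) f"
      using suminf_mult[OF summable_expk, of "4 * hol_norm (Suc n) f"] by simp
    finally show "Sigma_norm N4 n (phi f) \<le> (\<lambda>n. 4 * (\<Sum>j. exp (- real j))) n * hol_norm (n + 1) f"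
      by simp
  qed
qed

definition tm :: "(nat \<Rightarrow> nat \<Rightarrow> real) \<Rightarrow> nat \<Rightarrow> complex \<Rightarrow> complex" where
  "tm s j w = d1 (s j) * w ^ j + d2 (s j) / w ^ Suc j"
definition Lser :: "(nat \<Rightarrow> nat \<Rightarrow> real) \<Rightarrow> complex \<Rightarrow> complex" where
  "Lser s = (\<lambda>w. \<Sum>j. tm s j w)"
definition Pavg :: "nat \<Rightarrow> nat \<Rightarrow> (complex \<Rightarrow> complex) \<Rightarrow> complex \<Rightarrow> complex" where
  "Pavg k l g z = (\<Sum>m<k. g (om k ^ m * z) / om k ^ (l * m)) / of_nat k"
definition psi :: "nat \<Rightarrow> nat \<Rightarrow> (nat \<Rightarrow> nat \<Rightarrow> real) \<Rightarrow> complex \<Rightarrow> complex" where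
  "psi k l s = (\<lambda>z. if z = 0 then 0 else Pavg k l (Lser s) z)"

lemma om_norm: "cmod (om k) = 1"
  by (simp add: om_def)

lemma om_nz: "om k \<noteq> 0" by (simp add: om_def)

lemma om_pow: assumes "k \<ge> 1" shows "om k ^ k = 1"
proof -
  have "om k ^ k = exp (of_nat k * (2 * pi * \<i> / of_nat k))"
    unfolding om_def by (rule exp_of_nat_mult[symmetric])
  also have "of_nat k * (2 * pi * \<i> / of_nat k) = 2 * pi * \<i>" using assms by simp
  finally show ?thesis by simp
qed

lemma Sigma_memD: "s \<in> Sigma_space V N \<Longrightarrow> summable (\<lambda>j. exp (real n * real j) * N (s j))"
  by (simp add: Sigma_space_def)

lemma tm_bound:
  assumes w: "w \<in> annulus_A n"
  shows "cmod (tm s j w) \<le> exp (real n) * (exp (real n * real j) * N4 (s j))"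
proof -
  have w0: "w \<noteq> 0" using annulus_ne0[OF w] .
  have lo: "exp (- real n) \<le> cmod w" and hi: "cmod w \<le> exp (real n)" using w by (auto simp: annulus_A_def)
  have wp: "cmod w > 0" using w0 by simp
  have inv: "1 / cmod w \<le> exp (real n)"
    using lo wp by (simp add: divide_simps exp_minus) (metis exp_gt_zero mult.commute pos_divide_le_eq)
  have E: "exp (real n * real j) = exp (real n) ^ j" by (rule exp_mult_nat)
  have a: "cmod (w ^ j) \<le> exp (real n) ^ j"
    by (simp add: norm_power power_mono hi)
  have b: "cmod (1 / w ^ Suc j) \<le> exp (real n) ^ Suc j"
  proof -
    have "cmod (1 / w ^ Suc j) = (1 / cmod w) ^ Suc j" by (simp add: norm_divide norm_power norm_mult power_one_over)
    also have "\<dots> \<le> exp (real n) ^ Suc j" by (rule power_mono[OF inv]) simp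
    finally show ?thesis .
  qed
  have "cmod (tm s j w) \<le> cmod (d1 (s j)) * cmod (w ^ j) + cmod (d2 (s j)) * cmod (1 / w ^ Suc j)"
    unfolding tm_def by (metis norm_triangle_le norm_mult order_refl times_divide_eq_right mult_1_right)
  also have "\<dots> \<le> cmod (d1 (s j)) * (exp (real n) * exp (real n) ^ j) + cmod (d2 (s j)) * (exp (real n) * exp (real n) ^ j)"
  proof (intro add_mono mult_left_mono)
    show "cmod (w ^ j) \<le> exp (real n) * exp (real n) ^ j"
      using a by (smt (verit) mult_le_cancel_right1 one_le_exp_iff of_nat_0_le_iff zero_le_power exp_gt_zero)
    show "cmod (1 / w ^ Suc j) \<le> exp (real n) * exp (real n) ^ j" using b by simp
  qed auto
  also have "\<dots> = (cmod (d1 (s j)) + cmod (d2 (s j))) * (exp (real n) * exp (real n) ^ j)"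
    by (simp add: algebra_simps)
  also have "\<dots> \<le> N4 (s j) * (exp (real n) * exp (real n) ^ j)"
    by (intro mult_right_mono d12_bound) simp
  finally show ?thesis using E by (simp add: mult_ac)
qed

lemma tm_summable:
  assumes s: "s \<in> Sigma_space V N4"
  shows "summable (\<lambda>j. exp (real n) * (exp (real n * real j) * N4 (s j)))"
  by (intro summable_mult Sigma_memD[OF s])

lemma tm_summable_at:
  assumes s: "s \<in> Sigma_space V N4" and w: "w \<noteq> 0"
  shows "summable (\<lambda>j. tm s j w)" "summable (\<lambda>j. cmod (tm s j w))"
proof -
  obtain n where n: "w \<in> annulus_A n" using exists_annulus[OF w] by blast
  show "summable (\<lambda>j. cmod (tm s j w))"
    by (rule summable_comparison_test'[OF tm_summable[OF s, of n], of 0]) (use tm_bound[OF n] in simp)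
  then show "summable (\<lambda>j. tm s j w)" by (rule summable_norm_cancel)
qed

lemma Lser_bound:
  assumes s: "s \<in> Sigma_space V N4" and w: "w \<in> annulus_A n"
  shows "cmod (Lser s w) \<le> exp (real n) * Sigma_norm N4 n s"
proof -
  have w0: "w \<noteq> 0" using annulus_ne0[OF w] .
  have "cmod (Lser s w) \<le> (\<Sum>j. cmod (tm s j w))"
    unfolding Lser_def by (rule summable_norm[OF tm_summable_at(2)[OF s w0]])
  also have "\<dots> \<le> (\<Sum>j. exp (real n) * (exp (real n * real j) * N4 (s j)))"
    by (rule suminf_le[OF _ tm_summable_at(2)[OF s w0] tm_summable[OF s]]) (rule tm_bound[OF w])
  also have "\<dots> = exp (real n) * Sigma_norm N4 n s"
    unfolding Sigma_norm_def by (rule suminf_mult[OF Sigma_memD[OF s]])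
  finally show ?thesis .
qed

lemma tm_holo: "(\<lambda>w. tm s j w) holomorphic_on -{0}"
  unfolding tm_def by (auto intro!: holomorphic_intros)

lemma Lser_holo:
  assumes s: "s \<in> Sigma_space V N4"
  shows "Lser s holomorphic_on -{0}"
proof (rule holo_from_annuli[where F = "\<lambda>N w. \<Sum>j<N. tm s j w"])
  fix N show "(\<lambda>w. \<Sum>j<N. tm s j w) holomorphic_on -{0}"
    by (intro holomorphic_on_sum tm_holo)
next
  fix n
  show "uniform_limit (annulus_A n) (\<lambda>N w. \<Sum>j<N. tm s j w) (Lser s) sequentially"
    unfolding Lser_def
    by (rule Weierstrass_m_test[where M = "\<lambda>j. exp (real n) * (exp (real n * real j) * N4 (s j))"])
       (auto intro: tm_bound Sigma_memD[OF s])
qed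

lemma Lser_add:
  assumes s: "s \<in> Sigma_space V N4" and t: "t \<in> Sigma_space V N4" and w: "w \<noteq> 0"
  shows "Lser (s + t) w = Lser s w + Lser t w"
proof -
  have "(\<lambda>j. tm (s + t) j w) = (\<lambda>j. tm s j w + tm t j w)"
    by (simp add: tm_def d1_add d2_add fun_eq_iff algebra_simps add_divide_distrib)
  then show ?thesis
    unfolding Lser_def using suminf_add[OF tm_summable_at(1)[OF s w] tm_summable_at(1)[OF t w]] by simp
qed

lemma Lser_scale:
  assumes s: "s \<in> Sigma_space V N4" and w: "w \<noteq> 0"
  shows "Lser (a *\<^sub>R s) w = of_real a * Lser s w"
proof -
  have "(\<lambda>j. tm (a *\<^sub>R s) j w) = (\<lambda>j. of_real a * tm s j w)"
    by (simp add: tm_def d1_scale d2_scale fun_eq_iff algebra_simps)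
  then show ?thesis
    unfolding Lser_def using suminf_mult[OF tm_summable_at(1)[OF s w], of "of_real a"] by simp
qed

lemma om_pow_ne0: "z \<noteq> 0 \<Longrightarrow> om k ^ m * z \<noteq> 0"
  by (simp add: om_nz)

lemma Pavg_cong:
  assumes "\<And>w. w \<noteq> 0 \<Longrightarrow> g w = h w" and "z \<noteq> 0"
  shows "Pavg k l g z = Pavg k l h z"
  unfolding Pavg_def using assms om_pow_ne0 by (metis (no_types, lifting) sum.cong)

lemma Pavg_add: "Pavg k l (\<lambda>w. g w + h w) z = Pavg k l g z + Pavg k l h z"
  unfolding Pavg_def by (simp add: sum.distrib add_divide_distrib)

lemma Pavg_scale: "Pavg k l (\<lambda>w. c * g w) z = c * Pavg k l g z"
  unfolding Pavg_def by (simp add: sum_distrib_left mult.assoc)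

lemma holo_scale_arg:
  assumes g: "g holomorphic_on -{0}" and c: "c \<noteq> 0"
  shows "(\<lambda>z. g (c * z)) holomorphic_on -{0}"
proof -
  have "(g \<circ> (\<lambda>z. c * z)) holomorphic_on -{0}"
    by (rule holomorphic_on_compose_gen[OF _ g]) (use c in \<open>auto intro!: holomorphic_intros\<close>)
  then show ?thesis by (simp add: o_def)
qed

lemma Pavg_holo:
  assumes g: "g holomorphic_on -{0}"
  shows "Pavg k l g holomorphic_on -{0}"
proof -
  have "(\<lambda>z. (\<Sum>m<k. g (om k ^ m * z) / om k ^ (l * m)) / of_nat k) holomorphic_on -{0}"
    by (intro holomorphic_intros holomorphic_on_sum holo_scale_arg[OF g]) (auto simp: om_nz)
  then show ?thesis unfolding Pavg_def[abs_def] by simp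
qed

lemma sum_shift_cyc:
  fixes G :: "nat \<Rightarrow> 'a::comm_monoid_add"
  assumes "k \<ge> 1" "G k = G 0"
  shows "(\<Sum>m<k. G (Suc m)) = (\<Sum>m<k. G m)"
proof -
  obtain n where k: "k = Suc n" using assms(1) by (cases k) auto
  have "(\<Sum>m<k. G (Suc m)) = (\<Sum>m<n. G (Suc m)) + G 0" using assms(2) k by simp
  also have "\<dots> = (\<Sum>m<k. G m)" unfolding k sum.lessThan_Suc_shift by (simp add: add.commute)
  finally show ?thesis .
qed

lemma Pavg_sym:
  assumes k: "k \<ge> 1"
  shows "Pavg k l g (om k * z) = om k ^ l * Pavg k l g z"
proof -
  define c where "c = om k"
  have c0: "c \<noteq> 0" by (simp add: c_def om_nz)
  have ck: "c ^ k = 1" by (simp add: c_def om_pow[OF k])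
  define G where "G m = g (c ^ m * z) / c ^ (l * m)" for m
  have "G k = G 0" by (simp add: G_def ck power_mult[symmetric] mult.commute[of l k] power_mult) 
  have eq: "g (c ^ m * (c * z)) / c ^ (l * m) = c ^ l * G (Suc m)" for m
    using c0 by (simp add: G_def power_add algebra_simps)
  have "(\<Sum>m<k. g (c ^ m * (c * z)) / c ^ (l * m)) = c ^ l * (\<Sum>m<k. G m)"
    unfolding eq sum_distrib_left[symmetric] using sum_shift_cyc[OF k \<open>G k = G 0\<close>] by simp
  then show ?thesis unfolding Pavg_def c_def[symmetric] G_def by (simp add: mult.assoc)
qed

lemma Hol_pow:
  assumes f: "f \<in> Hol_kl k l" and z: "z \<noteq> 0"
  shows "f (om k ^ m * z) = om k ^ (l * m) * f z"
proof (induction m)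
  case 0 then show ?case by simp
next
  case (Suc m)
  have "f (om k ^ Suc m * z) = f (om k * (om k ^ m * z))" by (simp add: mult.assoc)
  also have "\<dots> = om k ^ l * f (om k ^ m * z)"
    using f om_pow_ne0[OF z] by (simp add: Hol_kl_iff)
  also have "\<dots> = om k ^ (l * Suc m) * f z" using Suc by (simp add: power_add)
  finally show ?case .
qed

lemma Pavg_fix:
  assumes k: "k \<ge> 1" and f: "f \<in> Hol_kl k l" and z: "z \<noteq> 0"
  shows "Pavg k l f z = f z"
proof -
  have "(\<Sum>m<k. f (om k ^ m * z) / om k ^ (l * m)) = (\<Sum>m<k. f z)"
    by (rule sum.cong) (auto simp: Hol_pow[OF f z] om_nz)
  then show ?thesis using k by (simp add: Pavg_def)
qed

lemma Pavg_bound: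
  assumes k: "k \<ge> 1" and z: "z \<in> annulus_A n" and B: "\<And>w. w \<in> annulus_A n \<Longrightarrow> cmod (g w) \<le> B"
  shows "cmod (Pavg k l g z) \<le> B"
proof -
  have "cmod (\<Sum>m<k. g (om k ^ m * z) / om k ^ (l * m)) \<le> (\<Sum>m<k. cmod (g (om k ^ m * z) / om k ^ (l * m)))"
    by (rule norm_sum)
  also have "\<dots> \<le> (\<Sum>m<k. B)"
  proof (rule sum_mono)
    fix m
    have "om k ^ m * z \<in> annulus_A n"
      by (rule annulus_norm[OF _ z]) (simp add: norm_mult norm_power om_norm)
    then show "cmod (g (om k ^ m * z) / om k ^ (l * m)) \<le> B"
      using B by (simp add: norm_divide norm_power om_norm)
  qed
  finally show ?thesis using k by (simp add: Pavg_def norm_divide divide_simps mult.commute)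
qed

lemma psi_Hol:
  assumes k: "k \<ge> 1" and s: "s \<in> Sigma_space V N4"
  shows "psi k l s \<in> Hol_kl k l"
  unfolding Hol_kl_iff
proof (intro conjI allI impI)
  show "psi k l s holomorphic_on -{0}"
    by (rule holomorphic_transform[OF Pavg_holo[OF Lser_holo[OF s]]]) (simp add: psi_def)
  show "psi k l s 0 = 0" by (simp add: psi_def)
  fix z :: complex assume z: "z \<noteq> 0"
  then have "om k * z \<noteq> 0" by (simp add: om_nz)
  then show "psi k l s (om k * z) = om k ^ l * psi k l s z"
    using z by (simp add: psi_def Pavg_sym[OF k])
qed

lemma psi_tame:
  assumes k: "k \<ge> 1"
  shows "tame_map (Sigma_space V4 N4) (Sigma_norm N4) (Hol_kl k l) hol_norm (psi k l)"
  unfolding tame_map_def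
proof (intro conjI ballI allI)
  fix s assume "s \<in> Sigma_space V4 N4"
  then show "psi k l s \<in> Hol_kl k l" by (rule psi_Hol[OF k])
next
  fix s t assume s: "s \<in> Sigma_space V4 N4" and t: "t \<in> Sigma_space V4 N4"
  show "psi k l (s + t) = psi k l s + psi k l t"
  proof
    fix z show "psi k l (s + t) z = (psi k l s + psi k l t) z"
    proof (cases "z = 0")
      case True then show ?thesis by (simp add: psi_def)
    next
      case False
      have "Pavg k l (Lser (s + t)) z = Pavg k l (\<lambda>w. Lser s w + Lser t w) z"
        by (rule Pavg_cong[OF Lser_add[OF s t] False])
      then show ?thesis using False by (simp add: psi_def Pavg_add)
    qed
  qed
next
  fix a :: real and s assume s: "s \<in> Sigma_space V4 N4"
  show "psi k l (a *\<^sub>R s) = a *\<^sub>R psi k l s"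
  proof
    fix z show "psi k l (a *\<^sub>R s) z = (a *\<^sub>R psi k l s) z"
    proof (cases "z = 0")
      case True then show ?thesis by (simp add: psi_def)
    next
      case False
      have "Pavg k l (Lser (a *\<^sub>R s)) z = Pavg k l (\<lambda>w. of_real a * Lser s w) z"
        by (rule Pavg_cong[OF Lser_scale[OF s] False])
      then show ?thesis using False by (simp add: psi_def Pavg_scale scaleR_conv_of_real)
    qed
  qed
next
  show "\<exists>r b. \<exists>C::nat\<Rightarrow>real. \<forall>n\<ge>b. \<forall>s\<in>Sigma_space V4 N4.
      hol_norm n (psi k l s) \<le> C n * Sigma_norm N4 (n + r) s"
  proof (rule exI[of _ 0], rule exI[of _ 0], rule exI[of _ "\<lambda>n. exp (real n)"], intro allI impI ballI)
    fix n s assume "n \<ge> (0::nat)" and s: "s \<in> Sigma_space V4 N4"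
    have "hol_norm n (psi k l s) \<le> exp (real n) * Sigma_norm N4 n s"
    proof (rule hol_norm_le)
      fix z assume z: "z \<in> annulus_A n"
      have eq: "psi k l s z = Pavg k l (Lser s) z" using annulus_ne0[OF z] by (simp add: psi_def)
      have "cmod (Pavg k l (Lser s) z) \<le> exp (real n) * Sigma_norm N4 n s"
        by (rule Pavg_bound[OF k z Lser_bound[OF s]])
      then show "cmod (psi k l s z) \<le> exp (real n) * Sigma_norm N4 n s" by (simp only: eq)
    qed
    then show "hol_norm n (psi k l s) \<le> exp (real n) * Sigma_norm N4 (n + 0) s" by simp
  qed
qed

lemma psi_phi:
  assumes k: "k \<ge> 1" and f: "f \<in> Hol_kl k l"
  shows "psi k l (phi f) = f"
proof
  fix z show "psi k l (phi f) z = f z"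
  proof (cases "z = 0")
    case True then show ?thesis using f by (simp add: psi_def Hol_kl_iff)
  next
    case False
    have L: "Lser (phi f) w = f w" if w: "w \<noteq> 0" for w
      using sums_unique[OF laurent[OF Hol_holo[OF f] w]]
      by (simp add: Lser_def tm_def phi_def)
    have "Pavg k l (Lser (phi f)) z = Pavg k l f z" by (rule Pavg_cong[OF L False])
    then show ?thesis using False Pavg_fix[OF k f False] by (simp add: psi_def)
  qed
qed

theorem mainTheorem4:
  fixes k l :: nat
  assumes "k \<ge> 1"
  shows "tame_frechet (Hol_kl k l) hol_norm"
  unfolding tame_frechet_def
  using graded_Hol banach_V4 phi_tame psi_tame[OF assms] psi_phi[OF assms] by blast

end
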